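(* Let $k$ be a positive integer. Let $G$ be an $n$-vertex graph with maximum degree $\Delta := \Delta(n)$, let $m \geq 3k^2\Delta$, let $\mathcal{L}$ be a random $(k,m)$-list-assignment for $G$, and let $B := B(G,\mathcal{L})$ be the graph of dangerous edges. Then a.a.s. (as $n \to \infty$) every connected component of $B$ has at most $20 \log n$ vertices.
   Context: A random $(k,m)$-list-assignment $\mathcal{L} = \{L(v) : v \in V(G)\}$ assigns to each vertex a uniformly random $k$-element subset of $\{1,\ldots,m\}$, independently over vertices. An edge $uv \in E(G)$ is dangerous (with respect to $\mathcal{L}$) if $L(u) \cap L(v) \neq \emptyset$; $B(G,\mathcal{L})$ is the spanning subgraph of $G$ consisting of all dangerous edges. $\log$ is the natural logarithm. *)

theory Defs
  imports "HOL-Probability.Probability"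
begin

text \<open>A graph on vertex set {0..<n} is given by a symmetric irreflexive edge
relation E (only pairs of vertices below n are considered).\<close>

definition max_degree :: "nat \<Rightarrow> (nat \<Rightarrow> nat \<Rightarrow> bool) \<Rightarrow> nat" where
  "max_degree n E = Max (insert 0 ((\<lambda>v. card {u. u < n \<and> E v u}) ` {..<n}))"

definition random_list_assignment :: "nat \<Rightarrow> nat \<Rightarrow> nat \<Rightarrow> (nat \<Rightarrow> nat set) pmf" where
  "random_list_assignment k m n =
     Pi_pmf {..<n} {} (\<lambda>_. pmf_of_set {S. S \<subseteq> {1..m} \<and> card S = k})"

definition dangerous :: "nat \<Rightarrow> (nat \<Rightarrow> nat \<Rightarrow> bool) \<Rightarrow> (nat \<Rightarrow> nat set) \<Rightarrow> nat \<Rightarrow> nat \<Rightarrow> bool" where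
  "dangerous n E L u v \<longleftrightarrow> u < n \<and> v < n \<and> E u v \<and> L u \<inter> L v \<noteq> {}"

definition component :: "nat \<Rightarrow> (nat \<Rightarrow> nat \<Rightarrow> bool) \<Rightarrow> (nat \<Rightarrow> nat set) \<Rightarrow> nat \<Rightarrow> nat set" where
  "component n E L v = {u. (dangerous n E L)\<^sup>*\<^sup>* v u}"

end

theory Submission
  imports Defs "HOL-Analysis.Analysis"
begin

definition Ks :: "nat \<Rightarrow> nat \<Rightarrow> nat set set" where
  "Ks k m = {S. S \<subseteq> {1..m} \<and> card S = k}"

lemma Ks_finite: "finite (Ks k m)"
  unfolding Ks_def by (rule finite_subset[of _ "Pow {1..m}"]) auto

lemma Ks_nonempty: "k \<le> m \<Longrightarrow> Ks k m \<noteq> {}"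
  proof -
  assume "k \<le> m"
  hence "{1..k} \<in> Ks k m" unfolding Ks_def by auto
  thus ?thesis by auto
qed

lemma card_Ks: "card (Ks k m) = m choose k"
  unfolding Ks_def using n_subsets[of "{1..m}" k] by simp

lemma card_Ks_mem:
  assumes "j \<in> {1..m}" "k > 0"
  shows "card (Ks k m \<inter> {S. j \<in> S}) = (m - 1) choose (k - 1)"
proof -
  have "bij_betw (\<lambda>S. S - {j}) (Ks k m \<inter> {S. j \<in> S}) {S. S \<subseteq> {1..m} - {j} \<and> card S = k - 1}"
  proof (rule bij_betwI[where g = "insert j"])
    show "(\<lambda>S. S - {j}) \<in> Ks k m \<inter> {S. j \<in> S} \<rightarrow> {S. S \<subseteq> {1..m} - {j} \<and> card S = k - 1}"
    proof
      fix S assume "S \<in> Ks k m \<inter> {S. j \<in> S}"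
      hence S: "S \<subseteq> {1..m}" "card S = k" "j \<in> S" unfolding Ks_def by auto
      have fS: "finite S" using S(1) by (rule finite_subset) simp
      have "card (S - {j}) = k - 1" using fS S(2,3) by simp
      thus "S - {j} \<in> {S. S \<subseteq> {1..m} - {j} \<and> card S = k - 1}" using S(1) by auto
    qed
    show "insert j \<in> {S. S \<subseteq> {1..m} - {j} \<and> card S = k - 1} \<rightarrow> Ks k m \<inter> {S. j \<in> S}"
    proof
      fix S assume "S \<in> {S. S \<subseteq> {1..m} - {j} \<and> card S = k - 1}"
      hence S: "S \<subseteq> {1..m} - {j}" "card S = k - 1" by auto
      have fS: "finite S" using S(1) by (rule finite_subset) simp
      have "j \<notin> S" using S(1) by auto
      hence "card (insert j S) = k" using fS S(2) assms(2) by simp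
      thus "insert j S \<in> Ks k m \<inter> {S. j \<in> S}" using S(1) assms(1) unfolding Ks_def by auto
    qed
  qed (auto simp: Ks_def)
  hence "card (Ks k m \<inter> {S. j \<in> S}) = card {S. S \<subseteq> {1..m} - {j} \<and> card S = k - 1}"
    by (rule bij_betw_same_card)
  also have "\<dots> = card ({1..m} - {j}) choose (k - 1)" by (rule n_subsets) simp
  also have "card ({1..m} - {j}) = m - 1" using assms by simp
  finally show ?thesis .
qed

lemma prob_mem:
  assumes "j \<in> {1..m}" "k > 0" "k \<le> m"
  shows "measure_pmf.prob (pmf_of_set (Ks k m)) {S. j \<in> S} = k / m"
proof -
  have "measure_pmf.prob (pmf_of_set (Ks k m)) {S. j \<in> S} = card (Ks k m \<inter> {S. j \<in> S}) / card (Ks k m)"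
    using Ks_finite Ks_nonempty[OF assms(3)] by (simp add: measure_pmf_of_set)
  also have "\<dots> = ((m - 1) choose (k - 1)) / (m choose k)"
    using card_Ks_mem[OF assms(1,2)] card_Ks by simp
  also have "\<dots> = k / m"
  proof -
    have "k * (m choose k) = m * ((m - 1) choose (k - 1))" by (rule times_binomial_minus1_eq) fact
    hence "real k * real (m choose k) = real m * real ((m - 1) choose (k - 1))"
      by (metis of_nat_mult)
    moreover have "(m choose k) > 0" using assms by simp
    moreover have "m > 0" using assms by simp
    ultimately show ?thesis by (simp add: field_simps)
  qed
  finally show ?thesis .
qed

lemma prob_inter:
  assumes "T \<in> Ks k m" "k > 0" "k \<le> m"
  shows "measure_pmf.prob (pmf_of_set (Ks k m)) {S. S \<inter> T \<noteq> {}} \<le> real k * real k / real m"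
proof -
  have fT: "finite T" and Tm: "T \<subseteq> {1..m}" and cT: "card T = k"
    using assms(1) unfolding Ks_def by (auto intro: finite_subset)
  have "{S. S \<inter> T \<noteq> {}} = (\<Union>j\<in>T. {S. j \<in> S})" by auto
  hence "measure_pmf.prob (pmf_of_set (Ks k m)) {S. S \<inter> T \<noteq> {}}
       \<le> (\<Sum>j\<in>T. measure_pmf.prob (pmf_of_set (Ks k m)) {S. j \<in> S})"
    using measure_pmf.finite_measure_subadditive_finite[OF fT, of "\<lambda>j. {S. j \<in> S}"] by simp
  also have "\<dots> = (\<Sum>j\<in>T. real k / real m)"
    using Tm assms by (intro sum.cong refl prob_mem) auto
  also have "\<dots> = real k * real k / real m" using cT by simp
  finally show ?thesis .
qed


lemma pair_bound:
  fixes A :: "'a pmf" and B :: "'b pmf"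
  assumes h: "\<And>f. f \<in> set_pmf B \<Longrightarrow> P f \<Longrightarrow> measure_pmf.prob A {y. R y f} \<le> q" and q: "q \<ge> 0"
  shows "measure_pmf.prob (pair_pmf A B) {(y,f). P f \<and> R y f} \<le> q * measure_pmf.prob B {f. P f}"
proof -
  let ?S = "{(f,y). P f \<and> R y f}"
  have eq: "measure_pmf.prob (pair_pmf A B) {(y,f). P f \<and> R y f} = measure_pmf.prob (pair_pmf B A) ?S"
    by (subst pair_commute_pmf) (simp add: vimage_def case_prod_unfold)
  have "emeasure (measure_pmf (pair_pmf B A)) ?S = (\<integral>\<^sup>+x. indicator ?S x \<partial>measure_pmf (pair_pmf B A))"
    by (simp add: nn_integral_indicator)
  also have "\<dots> = (\<integral>\<^sup>+f. \<integral>\<^sup>+y. indicator ?S (f,y) \<partial>measure_pmf A \<partial>measure_pmf B)"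
    by (rule nn_integral_pair_pmf')
  also have "\<dots> \<le> (\<integral>\<^sup>+f. ennreal q * indicator {f. P f} f \<partial>measure_pmf B)"
  proof (rule nn_integral_mono_AE, rule AE_pmfI)
    fix f assume f: "f \<in> set_pmf B"
    show "(\<integral>\<^sup>+y. indicator ?S (f,y) \<partial>measure_pmf A) \<le> ennreal q * indicator {f. P f} f"
    proof (cases "P f")
      case True
      have "(\<integral>\<^sup>+y. indicator ?S (f,y) \<partial>measure_pmf A) = (\<integral>\<^sup>+y. indicator {y. R y f} y \<partial>measure_pmf A)"
        using True by (intro nn_integral_cong) (auto simp: indicator_def)
      also have "\<dots> = emeasure (measure_pmf A) {y. R y f}" by (simp add: nn_integral_indicator)
      also have "\<dots> = ennreal (measure_pmf.prob A {y. R y f})" by (simp add: measure_pmf.emeasure_eq_measure)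
      also have "\<dots> \<le> ennreal q" using h[OF f True] by (simp add: ennreal_leI)
      finally show ?thesis using True by simp
    next
      case False
      hence "(\<integral>\<^sup>+y. indicator ?S (f,y) \<partial>measure_pmf A) = 0"
        by (intro nn_integral_zero') (auto simp: indicator_def)
      thus ?thesis by simp
    qed
  qed
  also have "\<dots> = ennreal q * emeasure (measure_pmf B) {f. P f}"
    by (simp add: nn_integral_cmult_indicator)
  also have "\<dots> = ennreal (q * measure_pmf.prob B {f. P f})"
    using q by (simp add: measure_pmf.emeasure_eq_measure ennreal_mult)
  finally have "ennreal (measure_pmf.prob (pair_pmf B A) ?S) \<le> ennreal (q * measure_pmf.prob B {f. P f})"
    by (simp add: measure_pmf.emeasure_eq_measure)
  hence "measure_pmf.prob (pair_pmf B A) ?S \<le> q * measure_pmf.prob B {f. P f}"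
    using q by (simp add: ennreal_le_iff)
  thus ?thesis using eq by simp
qed

definition Ev :: "nat list \<Rightarrow> (nat \<Rightarrow> nat) \<Rightarrow> (nat \<Rightarrow> nat set) set" where
  "Ev xs pr = {L. \<forall>i\<in>{1..<length xs}. L (xs!i) \<inter> L (xs!(pr i)) \<noteq> {}}"

lemma ball_insert_swap: "(\<forall>i\<in>insert a A. P i) = ((\<forall>i\<in>A. P i) \<and> P a)"
  by blast

lemma tree_prob:
  assumes "finite I" "distinct xs" "set xs \<subseteq> I" "\<forall>i\<in>{1..<length xs}. pr i < i" "0 < k" "k \<le> m"
  shows "measure_pmf.prob (Pi_pmf I {} (\<lambda>_. pmf_of_set (Ks k m))) (Ev xs pr)
           \<le> (real k * real k / real m) ^ (length xs - 1)"
  using assms(1-4)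
proof (induction xs arbitrary: I rule: rev_induct)
  case Nil
  then show ?case by simp
next
  case (snoc x xs)
  let ?q = "real k * real k / real m"
  let ?K = "pmf_of_set (Ks k m)"
  show ?case
  proof (cases "xs = []")
    case True
    then show ?thesis by simp
  next
    case False
    define s where "s = length xs"
    have s1: "s \<ge> 1" using False unfolding s_def by (cases xs) auto
    have prs: "pr s < s" using snoc.prems(4) s1 by (simp add: s_def)
    define z where "z = xs ! pr s"
    have xnot: "x \<notin> set xs" using snoc.prems(2) by simp
    have "z \<in> set xs" unfolding z_def using prs by (simp add: s_def)
    hence zin: "z \<in> I - {x}" using snoc.prems(3) xnot by auto
    have I: "I = insert x (I - {x})" using snoc.prems(3) by auto
    have "Pi_pmf I {} (\<lambda>_. ?K) = map_pmf (\<lambda>(y,f). f(x:=y)) (pair_pmf ?K (Pi_pmf (I - {x}) {} (\<lambda>_. ?K)))"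
      by (subst I, rule Pi_pmf_insert) (use snoc.prems(1) in auto)
    hence "measure_pmf.prob (Pi_pmf I {} (\<lambda>_. ?K)) (Ev (xs @ [x]) pr)
         = measure_pmf.prob (pair_pmf ?K (Pi_pmf (I - {x}) {} (\<lambda>_. ?K)))
              ((\<lambda>(y,f). f(x:=y)) -` Ev (xs @ [x]) pr)" by (simp only: measure_map_pmf)
    also have "(\<lambda>(y,f). f(x:=y)) -` Ev (xs @ [x]) pr = {(y,f). f \<in> Ev xs pr \<and> y \<inter> f z \<noteq> {}}"
    proof -
      have nth_ne: "\<And>i. i < s \<Longrightarrow> xs ! i \<noteq> x" using xnot unfolding s_def by auto
      have "\<And>y f. (f(x:=y)) \<in> Ev (xs @ [x]) pr \<longleftrightarrow> f \<in> Ev xs pr \<and> y \<inter> f z \<noteq> {}"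
      proof -
        fix y f
        have rng: "{1..<length (xs @ [x])} = insert s {1..<s}" using s1 by (auto simp: s_def)
        have A0: "\<And>L. L \<in> Ev (xs @ [x]) pr \<longleftrightarrow>
          (\<forall>i\<in>{1..<s}. L ((xs@[x])!i) \<inter> L ((xs@[x])!(pr i)) \<noteq> {}) \<and>
          L ((xs@[x])!s) \<inter> L ((xs@[x])!(pr s)) \<noteq> {}"
          unfolding Ev_def rng mem_Collect_eq by (rule ball_insert_swap)
        have A: "(f(x:=y)) \<in> Ev (xs @ [x]) pr \<longleftrightarrow>
          (\<forall>i\<in>{1..<s}. (f(x:=y)) ((xs@[x])!i) \<inter> (f(x:=y)) ((xs@[x])!(pr i)) \<noteq> {}) \<and>
          (f(x:=y)) ((xs@[x])!s) \<inter> (f(x:=y)) ((xs@[x])!(pr s)) \<noteq> {}"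
          by (rule A0)
        have B: "\<forall>i\<in>{1..<s}. (f(x:=y)) ((xs@[x])!i) \<inter> (f(x:=y)) ((xs@[x])!(pr i))
                 = f (xs!i) \<inter> f (xs!(pr i))"
        proof
          fix i assume i: "i \<in> {1..<s}"
          have "pr i < i" using snoc.prems(4) i by (auto simp: s_def)
          hence lt: "pr i < s" "i < s" using i by auto
          have e1: "(xs@[x])!i = xs!i" "(xs@[x])!(pr i) = xs!(pr i)" using lt by (simp_all add: nth_append s_def)
          have e2: "xs!i \<noteq> x" "xs!(pr i) \<noteq> x" using lt nth_ne by auto
          show "(f(x:=y)) ((xs@[x])!i) \<inter> (f(x:=y)) ((xs@[x])!(pr i)) = f (xs!i) \<inter> f (xs!(pr i))"
            unfolding e1 using e2 by simp
        qed
        have C: "(f(x:=y)) ((xs@[x])!s) \<inter> (f(x:=y)) ((xs@[x])!(pr s)) = y \<inter> f z"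
        proof -
          have e1: "(xs@[x])!s = x" "(xs@[x])!(pr s) = z" using prs by (simp_all add: nth_append s_def z_def)
          have e2: "z \<noteq> x" using zin by simp
          show ?thesis unfolding e1 using e2 by simp
        qed
        have D: "f \<in> Ev xs pr \<longleftrightarrow> (\<forall>i\<in>{1..<s}. f (xs!i) \<inter> f (xs!(pr i)) \<noteq> {})"
          unfolding Ev_def s_def by simp
        have B': "(\<forall>i\<in>{1..<s}. (f(x:=y)) ((xs@[x])!i) \<inter> (f(x:=y)) ((xs@[x])!(pr i)) \<noteq> {})
             \<longleftrightarrow> (\<forall>i\<in>{1..<s}. f (xs!i) \<inter> f (xs!(pr i)) \<noteq> {})"
        proof (rule ball_cong[OF refl])
          fix i assume "i \<in> {1..<s}"
          thus "((f(x:=y)) ((xs@[x])!i) \<inter> (f(x:=y)) ((xs@[x])!(pr i)) \<noteq> {}) = (f (xs!i) \<inter> f (xs!(pr i)) \<noteq> {})"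
            using B by simp
        qed
        show "?thesis y f" unfolding A B' C D by (rule refl)
      qed
      note key = this
      show ?thesis
      proof (rule set_eqI)
        fix p :: "nat set \<times> (nat \<Rightarrow> nat set)"
        obtain y f where p: "p = (y, f)" by (cases p)
        show "p \<in> (\<lambda>(y,f). f(x:=y)) -` Ev (xs @ [x]) pr \<longleftrightarrow> p \<in> {(y,f). f \<in> Ev xs pr \<and> y \<inter> f z \<noteq> {}}"
          unfolding p vimage_def mem_Collect_eq case_prod_conv by (rule key)
      qed
    qed
    also have "measure_pmf.prob (pair_pmf ?K (Pi_pmf (I - {x}) {} (\<lambda>_. ?K))) {(y,f). f \<in> Ev xs pr \<and> y \<inter> f z \<noteq> {}}
        \<le> ?q * measure_pmf.prob (Pi_pmf (I - {x}) {} (\<lambda>_. ?K)) {f. f \<in> Ev xs pr}"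
    proof (rule pair_bound[where P="\<lambda>f. f \<in> Ev xs pr" and R="\<lambda>y f. y \<inter> f z \<noteq> {}"])
      fix f assume "f \<in> set_pmf (Pi_pmf (I - {x}) {} (\<lambda>_. ?K))"
      hence "f \<in> PiE_dflt (I - {x}) {} (set_pmf \<circ> (\<lambda>_. ?K))"
        using set_Pi_pmf[of "I - {x}" "{}" "\<lambda>_. ?K"] snoc.prems(1) by simp
      hence "f z \<in> set_pmf ?K" using zin unfolding PiE_dflt_def by simp
      hence "f z \<in> Ks k m" using Ks_finite Ks_nonempty[OF assms(6)] by simp
      hence "f z \<in> Ks k m" .
      thus "measure_pmf.prob ?K {y. y \<inter> f z \<noteq> {}} \<le> ?q" using prob_inter assms(5,6) by blast
    qed simp
    also have "\<dots> \<le> ?q * ?q ^ (length xs - 1)"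
    proof (rule mult_left_mono)
      have "measure_pmf.prob (Pi_pmf (I - {x}) {} (\<lambda>_. ?K)) (Ev xs pr) \<le> ?q ^ (length xs - 1)"
      proof (rule snoc.IH)
        show "finite (I - {x})" using snoc.prems(1) by simp
        show "distinct xs" using snoc.prems(2) by simp
        show "set xs \<subseteq> I - {x}" using snoc.prems(3) xnot by auto
        show "\<forall>i\<in>{1..<length xs}. pr i < i" using snoc.prems(4) by auto
      qed
      thus "measure_pmf.prob (Pi_pmf (I - {x}) {} (\<lambda>_. ?K)) {f. f \<in> Ev xs pr} \<le> ?q ^ (length xs - 1)" by simp
    qed simp
    also have "\<dots> = ?q ^ (length (xs @ [x]) - 1)"
    proof -
      have "length (xs @ [x]) - 1 = Suc (length xs - 1)" using s1 by (simp add: s_def)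
      thus ?thesis by (simp only: power_Suc)
    qed
    finally show ?thesis .
  qed
qed



context
  fixes n :: nat and E :: "nat \<Rightarrow> nat \<Rightarrow> bool"
begin

definition "DD = max_degree n E"
definition "nb x = {u. u < n \<and> E x u}"
definition "idx x u = card {w. w < n \<and> E x w \<and> w < u}"
definition "cval xs pr i = pr i * DD + idx (xs ! (pr i)) (xs ! i)"

definition is_code :: "nat \<Rightarrow> nat \<Rightarrow> nat list \<Rightarrow> (nat \<Rightarrow> nat) \<Rightarrow> bool" where
  "is_code v t xs pr \<longleftrightarrow> length xs = t \<and> distinct xs \<and> set xs \<subseteq> {..<n} \<and> xs ! 0 = v \<and>
     (\<forall>i\<in>{1..<t}. pr i < i \<and> E (xs ! pr i) (xs ! i)) \<and> (\<forall>i. i \<notin> {1..<t} \<longrightarrow> pr i = 0) \<and>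
     (\<forall>i j. 1 \<le> i \<longrightarrow> i < j \<longrightarrow> j < t \<longrightarrow> cval xs pr i < cval xs pr j)"

lemma finite_nb: "finite (nb x)" unfolding nb_def by auto

lemma card_nb_le: "x < n \<Longrightarrow> card (nb x) \<le> DD"
  unfolding DD_def max_degree_def nb_def by (intro Max_ge) auto

lemma idx_less: "u \<in> nb x \<Longrightarrow> idx x u < card (nb x)"
proof -
  assume u: "u \<in> nb x"
  have a: "{w. w < n \<and> E x w \<and> w < u} \<subseteq> nb x" unfolding nb_def by blast
  have b: "u \<notin> {w. w < n \<and> E x w \<and> w < u}" by simp
  have "{w. w < n \<and> E x w \<and> w < u} \<subset> nb x" using a b u by blast
  thus ?thesis unfolding idx_def by (rule psubset_card_mono[OF finite_nb])
qed

lemma idx_less_DD: "x < n \<Longrightarrow> u \<in> nb x \<Longrightarrow> idx x u < DD"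
  using idx_less card_nb_le by (meson order_less_le_trans)

lemma idx_mono: "u \<in> nb x \<Longrightarrow> u' \<in> nb x \<Longrightarrow> u < u' \<Longrightarrow> idx x u < idx x u'"
proof -
  assume u: "u \<in> nb x" "u' \<in> nb x" "u < u'"
  have f: "finite {w. w < n \<and> E x w \<and> w < u'}" by (rule finite_subset[of _ "{..<n}"]) auto
  have a: "{w. w < n \<and> E x w \<and> w < u} \<subseteq> {w. w < n \<and> E x w \<and> w < u'}" using u(3) by auto
  have b: "u \<in> {w. w < n \<and> E x w \<and> w < u'}" using u unfolding nb_def by simp
  have c: "u \<notin> {w. w < n \<and> E x w \<and> w < u}" by simp
  have "{w. w < n \<and> E x w \<and> w < u} \<subset> {w. w < n \<and> E x w \<and> w < u'}" using a b c by blast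
  thus ?thesis unfolding idx_def by (rule psubset_card_mono[OF f])
qed

lemma idx_inj: "u \<in> nb x \<Longrightarrow> u' \<in> nb x \<Longrightarrow> idx x u = idx x u' \<Longrightarrow> u = u'"
  by (cases u u' rule: linorder_cases) (auto dest: idx_mono)

end

lemma decode:
  fixes D :: nat
  assumes "a < D" "b < D" "i * D + a = j * D + b"
  shows "i = j \<and> a = b"
proof -
  have D: "D > 0" using assms by simp
  have "i = (i * D + a) div D" using assms(1) D by simp
  also have "\<dots> = (j * D + b) div D" using assms(3) by simp
  also have "\<dots> = j" using assms(2) D by simp
  finally have ij: "i = j" .
  thus ?thesis using assms(3) by simp
qed

lemma strict_same_image:
  fixes f g :: "nat \<Rightarrow> nat"
  assumes f: "\<And>i j. 1 \<le> i \<Longrightarrow> i < j \<Longrightarrow> j < t \<Longrightarrow> f i < f j"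
      and g: "\<And>i j. 1 \<le> i \<Longrightarrow> i < j \<Longrightarrow> j < t \<Longrightarrow> g i < g j"
      and im: "f ` {1..<t} = g ` {1..<t}"
  shows "i \<in> {1..<t} \<Longrightarrow> f i = g i"
proof (induction i rule: less_induct)
  case (less i)
  have a: "f i \<ge> g i"
  proof -
    obtain j where j: "j \<in> {1..<t}" "f i = g j" using im less.prems by (metis imageE image_eqI)
    show ?thesis
    proof (cases "j < i")
      case True
      hence "g j = f j" using less.IH j by simp
      hence "f j = f i" using j by simp
      moreover have "f j < f i" using True j(1) less.prems by (intro f) auto
      ultimately show ?thesis by simp
    next
      case False
      thus ?thesis using g j less.prems by (cases "j = i") (auto intro: less_imp_le)
    qed
  qed
  have b: "g i \<ge> f i"
  proof -
    obtain j where j: "j \<in> {1..<t}" "g i = f j" using im less.prems by (metis imageE image_eqI)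
    show ?thesis
    proof (cases "j < i")
      case True
      hence "g j = f j" using less.IH j by simp
      hence "g j = g i" using j by simp
      moreover have "g j < g i" using True j(1) less.prems by (intro g) auto
      ultimately show ?thesis by simp
    next
      case False
      thus ?thesis using f j less.prems by (cases "j = i") (auto intro: less_imp_le)
    qed
  qed
  show ?case using a b by simp
qed



context
  fixes n :: nat and E :: "nat \<Rightarrow> nat \<Rightarrow> bool"
begin

lemma code_cval_bound:
  assumes "is_code n E v t xs pr" "i \<in> {1..<t}"
  shows "idx n E (xs ! pr i) (xs ! i) < DD n E" "cval n E xs pr i < t * DD n E"
proof -
  have c: "length xs = t" "set xs \<subseteq> {..<n}" "pr i < i" "E (xs ! pr i) (xs ! i)"
    using assms unfolding is_code_def by auto
  have "xs ! pr i < n" "xs ! i < n" using c assms(2) by (auto simp: subset_iff)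
  hence "xs ! i \<in> nb n E (xs ! pr i)" using c unfolding nb_def by auto
  thus I: "idx n E (xs ! pr i) (xs ! i) < DD n E" using idx_less_DD \<open>xs ! pr i < n\<close> by blast
  have "pr i + 1 \<le> t" using c assms(2) by auto
  hence "(pr i + 1) * DD n E \<le> t * DD n E" by (rule mult_right_mono) simp
  thus "cval n E xs pr i < t * DD n E" using I unfolding cval_def by simp
qed

lemma code_count:
  "finite {(xs,pr). is_code n E v t xs pr} \<and> card {(xs,pr). is_code n E v t xs pr} \<le> (t * DD n E) choose (t - 1)"
proof -
  define C where "C = {(xs,pr). is_code n E v t xs pr}"
  define enc where "enc = (\<lambda>(xs,pr). cval n E xs pr ` {1..<t})"
  define B where "B = {X. X \<subseteq> {..<t * DD n E} \<and> card X = t - 1}"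
  have fB: "finite B" unfolding B_def by (rule finite_subset[of _ "Pow {..<t * DD n E}"]) auto
  have sub: "enc ` C \<subseteq> B"
  proof
    fix X assume "X \<in> enc ` C"
    then obtain xs pr where c: "is_code n E v t xs pr" and X: "X = cval n E xs pr ` {1..<t}"
      unfolding C_def enc_def by auto
    have "X \<subseteq> {..<t * DD n E}" using code_cval_bound(2)[OF c] X by auto
    moreover have "inj_on (cval n E xs pr) {1..<t}"
    proof (rule inj_onI)
      fix i j assume ij: "i \<in> {1..<t}" "j \<in> {1..<t}" "cval n E xs pr i = cval n E xs pr j"
      show "i = j"
      proof (rule ccontr)
        assume "i \<noteq> j"
        hence "i < j \<or> j < i" by auto
        thus False using c ij unfolding is_code_def by (metis atLeastLessThan_iff less_irrefl)
      qed
    qed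
    hence "card X = t - 1" using X by (simp add: card_image)
    ultimately show "X \<in> B" unfolding B_def by simp
  qed
  have inj: "inj_on enc C"
  proof (rule inj_onI)
    fix a b assume a: "a \<in> C" and b: "b \<in> C" and e: "enc a = enc b"
    obtain xs pr where a': "a = (xs, pr)" and cx: "is_code n E v t xs pr" using a unfolding C_def by auto
    obtain ys qr where b': "b = (ys, qr)" and cy: "is_code n E v t ys qr" using b unfolding C_def by auto
    have im: "cval n E xs pr ` {1..<t} = cval n E ys qr ` {1..<t}" using e a' b' unfolding enc_def by simp
    have eqc: "\<And>i. i \<in> {1..<t} \<Longrightarrow> cval n E xs pr i = cval n E ys qr i"
      by (rule strict_same_image[where t = t]) (use cx cy im in \<open>auto simp: is_code_def\<close>)
    have dec: "\<And>i. i \<in> {1..<t} \<Longrightarrow> pr i = qr i \<and> idx n E (xs ! pr i) (xs ! i) = idx n E (ys ! qr i) (ys ! i)"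
      using eqc code_cval_bound(1)[OF cx] code_cval_bound(1)[OF cy] decode unfolding cval_def by blast
    have preq: "pr = qr"
    proof
      fix i show "pr i = qr i"
        using dec[of i] cx cy unfolding is_code_def by (cases "i \<in> {1..<t}") auto
    qed
    have "\<And>i. i < t \<Longrightarrow> xs ! i = ys ! i"
    proof -
      fix i show "i < t \<Longrightarrow> xs ! i = ys ! i"
      proof (induction i rule: less_induct)
        case (less i)
        show ?case
        proof (cases "i = 0")
          case True thus ?thesis using cx cy unfolding is_code_def by simp
        next
          case False
          hence i1: "i \<in> {1..<t}" using less.prems by auto
          have p: "pr i < i" using cx i1 unfolding is_code_def by auto
          have xeq: "xs ! pr i = ys ! pr i" using less.IH[OF p] p less.prems by simp
          have lx: "set xs \<subseteq> {..<n}" "length xs = t" "E (xs ! pr i) (xs ! i)"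
            using cx i1 unfolding is_code_def by auto
          have ly: "set ys \<subseteq> {..<n}" "length ys = t" "E (ys ! pr i) (ys ! i)"
            using cy i1 preq unfolding is_code_def by auto
          have "xs ! i \<in> nb n E (xs ! pr i)" using lx less.prems unfolding nb_def
            by (auto simp: subset_iff)
          moreover have "ys ! i \<in> nb n E (xs ! pr i)" using ly less.prems xeq unfolding nb_def
            by (auto simp: subset_iff)
          moreover have "idx n E (xs ! pr i) (xs ! i) = idx n E (xs ! pr i) (ys ! i)"
            using dec[OF i1] preq xeq by simp
          ultimately show ?thesis by (rule idx_inj)
        qed
      qed
    qed
    hence "xs = ys" using cx cy unfolding is_code_def by (intro nth_equalityI) auto
    thus "a = b" using a' b' preq by simp
  qed
  have "finite C" using inj sub fB by (metis finite_image_iff finite_subset)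
  moreover have "card C \<le> card B" using inj sub fB by (rule card_inj_on_le)
  moreover have "card B = (t * DD n E) choose (t - 1)" unfolding B_def using n_subsets[of "{..<t * DD n E}"] by simp
  ultimately show ?thesis unfolding C_def by simp
qed

end


lemma dang_D: "dangerous n E L a b \<Longrightarrow> a < n \<and> b < n \<and> E a b \<and> b \<in> nb n E a"
  unfolding dangerous_def nb_def by auto

lemma rtr_bound: "(dangerous n E L)\<^sup>*\<^sup>* v u \<Longrightarrow> u = v \<or> u < n"
  by (induction rule: rtranclp_induct) (auto simp: dangerous_def)

lemma finite_component: "finite (component n E L v)"
  by (rule finite_subset[of _ "insert v {..<n}"]) (auto simp: component_def dest: rtr_bound)

lemma edge_out: "R\<^sup>*\<^sup>* a w \<Longrightarrow> a \<in> A \<Longrightarrow> w \<notin> A \<Longrightarrow> \<exists>x\<in>A. \<exists>u. u \<notin> A \<and> R x u"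
  by (induction rule: rtranclp_induct) auto

lemma cval_snoc:
  assumes "i < length xs" "pr i < i" "k \<noteq> i"
  shows "cval n E (xs @ [u]) (pr(k := j)) i = cval n E xs pr i"
  using assms unfolding cval_def by (simp add: nth_append)

lemma greedy:
  assumes v: "v < n"
  shows "1 \<le> s \<Longrightarrow> s \<le> card (component n E L v) \<Longrightarrow>
    \<exists>xs pr. is_code n E v s xs pr \<and> (\<forall>i\<in>{1..<s}. dangerous n E L (xs ! pr i) (xs ! i))
      \<and> set xs \<subseteq> component n E L v
      \<and> (\<forall>j<s. \<forall>u. dangerous n E L (xs ! j) u \<longrightarrow> u \<notin> set xs \<longrightarrow> 2 \<le> s \<longrightarrow>
              cval n E xs pr (s - 1) < j * DD n E + idx n E (xs ! j) u)"
proof (induction s)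
  case 0
  then show ?case by simp
next
  case (Suc s)
  let ?Dg = "dangerous n E L"
  let ?C = "component n E L v"
  show ?case
  proof (cases "s = 0")
    case True
    have "is_code n E v 1 [v] (\<lambda>_. 0)" unfolding is_code_def using v by auto
    moreover have "v \<in> ?C" unfolding component_def by simp
    ultimately show ?thesis using True by (intro exI[of _ "[v]"] exI[of _ "\<lambda>_. 0"]) auto
  next
    case False
    hence s1: "1 \<le> s" by simp
    obtain xs pr where c: "is_code n E v s xs pr" and dg: "\<forall>i\<in>{1..<s}. ?Dg (xs ! pr i) (xs ! i)"
      and sub: "set xs \<subseteq> ?C"
      and inv: "\<forall>j<s. \<forall>u. ?Dg (xs ! j) u \<longrightarrow> u \<notin> set xs \<longrightarrow> 2 \<le> s \<longrightarrow>
              cval n E xs pr (s - 1) < j * DD n E + idx n E (xs ! j) u"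
      using Suc.IH[OF s1] Suc.prems by fastforce
    have len: "length xs = s" and dist: "distinct xs" and xsn: "set xs \<subseteq> {..<n}" and x0: "xs ! 0 = v"
      and cpr: "\<forall>i\<in>{1..<s}. pr i < i \<and> E (xs ! pr i) (xs ! i)"
      and cout: "\<forall>i. i \<notin> {1..<s} \<longrightarrow> pr i = 0"
      and cmono: "\<forall>i j. 1 \<le> i \<longrightarrow> i < j \<longrightarrow> j < s \<longrightarrow> cval n E xs pr i < cval n E xs pr j"
      using c unfolding is_code_def by auto
    have "card (set xs) = s" using dist len by (simp add: distinct_card)
    hence "card (set xs) < card ?C" using Suc.prems by simp
    hence "set xs \<noteq> ?C" by auto
    then obtain w where w: "w \<in> ?C" "w \<notin> set xs" using sub by auto
    have "0 < length xs" using len s1 by simp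
    hence "xs ! 0 \<in> set xs" by (rule nth_mem)
    hence vin: "v \<in> set xs" using x0 by simp
    have "?Dg\<^sup>*\<^sup>* v w" using w unfolding component_def by simp
    from edge_out[OF this vin w(2)] obtain x u0 where x: "x \<in> set xs" "u0 \<notin> set xs" "?Dg x u0"
      by blast
    obtain j0 where j0: "j0 < s" "xs ! j0 = x" using x(1) len by (metis in_set_conv_nth)
    define P where "P = {c. \<exists>j u. j < s \<and> u \<notin> set xs \<and> ?Dg (xs ! j) u \<and> c = j * DD n E + idx n E (xs ! j) u}"
    have "j0 * DD n E + idx n E (xs ! j0) u0 \<in> P" unfolding P_def using j0 x by blast
    define cs where "cs = (LEAST c. c \<in> P)"
    have csP: "cs \<in> P" unfolding cs_def by (rule LeastI) fact
    have csle: "\<And>c. c \<in> P \<Longrightarrow> cs \<le> c" unfolding cs_def by (rule Least_le)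
    obtain js us where jus: "js < s" "us \<notin> set xs" "?Dg (xs ! js) us"
      and csd: "cs = js * DD n E + idx n E (xs ! js) us" using csP unfolding P_def by blast
    have usn: "us < n" "E (xs ! js) us" "us \<in> nb n E (xs ! js)" using dang_D[OF jus(3)] by auto
    have xjsn: "xs ! js < n" using dang_D[OF jus(3)] by auto
    have idx_us: "idx n E (xs ! js) us < DD n E" using idx_less_DD[OF xjsn usn(3)] .
    define xs' where "xs' = xs @ [us]"
    define pr' where "pr' = pr(s := js)"
    have nth1: "\<And>i. i < s \<Longrightarrow> xs' ! i = xs ! i" unfolding xs'_def using len by (simp add: nth_append)
    have nth2: "xs' ! s = us" unfolding xs'_def using len nth_append_length by metis
    have cv_old: "\<And>i. i \<in> {1..<s} \<Longrightarrow> cval n E xs' pr' i = cval n E xs pr i"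
      unfolding xs'_def pr'_def using cpr len by (intro cval_snoc) auto
    have cv_new: "cval n E xs' pr' s = cs" unfolding cval_def pr'_def csd using nth1 nth2 jus(1) by simp
    have new_gt: "\<And>i. i \<in> {1..<s} \<Longrightarrow> cval n E xs pr i < cs"
    proof -
      fix i assume i: "i \<in> {1..<s}"
      hence s2: "2 \<le> s" by auto
      have "cval n E xs pr i \<le> cval n E xs pr (s - 1)"
        using cmono i by (cases "i = s - 1") (auto intro: less_imp_le)
      also have "\<dots> < cs" using inv jus csd s2 by blast
      finally show "cval n E xs pr i < cs" .
    qed
    have code': "is_code n E v (Suc s) xs' pr'"
      unfolding is_code_def
    proof (intro conjI allI impI ballI)
      show "length xs' = Suc s" unfolding xs'_def using len by simp
      show "distinct xs'" unfolding xs'_def using dist jus(2) by simp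
      show "set xs' \<subseteq> {..<n}" unfolding xs'_def using xsn usn by auto
      show "xs' ! 0 = v" using nth1[of 0] s1 x0 by simp
    next
      fix i assume i: "i \<in> {1..<Suc s}"
      show "pr' i < i"
      proof (cases "i = s")
        case True thus ?thesis using jus(1) by (simp add: pr'_def)
      next
        case False thus ?thesis using i cpr by (simp add: pr'_def)
      qed
      show "E (xs' ! pr' i) (xs' ! i)"
      proof (cases "i = s")
        case True thus ?thesis using jus(1) usn nth1 nth2 by (simp add: pr'_def)
      next
        case False
        hence i1: "i \<in> {1..<s}" using i by auto
        with cpr have p: "pr i < i" "E (xs ! pr i) (xs ! i)" by auto
        thus ?thesis using nth1[of "pr i"] nth1[of i] i1 False by (simp add: pr'_def)
      qed
    next
      fix i assume "i \<notin> {1..<Suc s}"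
      thus "pr' i = 0" using cout s1 by (cases "i = s") (auto simp: pr'_def)
    next
      fix i j assume ij: "1 \<le> i" "i < j" "j < Suc s"
      show "cval n E xs' pr' i < cval n E xs' pr' j"
      proof (cases "j = s")
        case True
        thus ?thesis using ij cv_old cv_new new_gt by simp
      next
        case False
        thus ?thesis using ij cv_old cmono by simp
      qed
    qed
    have dg': "\<forall>i\<in>{1..<Suc s}. ?Dg (xs' ! pr' i) (xs' ! i)"
    proof
      fix i assume i: "i \<in> {1..<Suc s}"
      show "?Dg (xs' ! pr' i) (xs' ! i)"
      proof (cases "i = s")
        case True thus ?thesis using jus nth1 nth2 by (simp add: pr'_def)
      next
        case False
        hence i1: "i \<in> {1..<s}" using i by auto
        with cpr dg have p: "pr i < i" "?Dg (xs ! pr i) (xs ! i)" by auto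
        thus ?thesis using nth1[of "pr i"] nth1[of i] i1 False by (simp add: pr'_def)
      qed
    qed
    have sub': "set xs' \<subseteq> ?C"
    proof -
      have "xs ! js \<in> ?C" using sub jus(1) len by (simp add: subset_iff)
      hence "?Dg\<^sup>*\<^sup>* v us" using jus(3) unfolding component_def by auto
      thus ?thesis using sub unfolding xs'_def component_def by auto
    qed
    have inv': "\<forall>j<Suc s. \<forall>u. ?Dg (xs' ! j) u \<longrightarrow> u \<notin> set xs' \<longrightarrow> 2 \<le> Suc s \<longrightarrow>
              cval n E xs' pr' (Suc s - 1) < j * DD n E + idx n E (xs' ! j) u"
    proof (intro allI impI)
      fix j u assume j: "j < Suc s" and du: "?Dg (xs' ! j) u" and un: "u \<notin> set xs'"
      have un': "u \<notin> set xs" "u \<noteq> us" using un unfolding xs'_def by auto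
      show "cval n E xs' pr' (Suc s - 1) < j * DD n E + idx n E (xs' ! j) u"
      proof (cases "j = s")
        case True
        have "cs < (js + 1) * DD n E" using csd idx_us by simp
        also have "\<dots> \<le> s * DD n E" using jus(1) by (intro mult_right_mono) auto
        also have "\<dots> \<le> j * DD n E + idx n E (xs' ! j) u" using True by simp
        finally show ?thesis using cv_new by simp
      next
        case False
        hence js': "j < s" using j by simp
        have du': "?Dg (xs ! j) u" using du nth1[OF js'] by simp
        hence inP: "j * DD n E + idx n E (xs ! j) u \<in> P" unfolding P_def using js' un' by blast
        have "cs \<noteq> j * DD n E + idx n E (xs ! j) u"
        proof
          assume eq: "cs = j * DD n E + idx n E (xs ! j) u"
          have xjn: "xs ! j < n" "u \<in> nb n E (xs ! j)" using dang_D[OF du'] by auto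
          have "js = j \<and> idx n E (xs ! js) us = idx n E (xs ! j) u"
            using decode[OF idx_us idx_less_DD[OF xjn]] eq csd by simp
          hence "us = u" using idx_inj usn(3) xjn(2) by auto
          thus False using un' by simp
        qed
        hence "cs < j * DD n E + idx n E (xs ! j) u" using csle[OF inP] by simp
        thus ?thesis using cv_new nth1[OF js'] by simp
      qed
    qed
    show ?thesis using code' dg' sub' inv' by blast
  qed
qed



lemma fact_binom: "real (N choose r) * fact r \<le> real N ^ r"
proof (cases "r \<le> N")
  case True
  have "fact r * fact (N - r) * (N choose r) = (fact N :: nat)" by (rule binomial_fact_lemma[OF True])
  hence "fact N div fact (N - r) = fact r * (N choose r)"
    by (metis fact_nonzero mult.assoc mult.commute nonzero_mult_div_cancel_left)
  hence "fact r * (N choose r) \<le> N ^ r" using fact_div_fact_le_pow[OF True] by simp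
  hence "real (fact r * (N choose r)) \<le> real (N ^ r)" by (rule of_nat_mono)
  thus ?thesis by (simp add: mult.commute)
next
  case False thus ?thesis by (simp add: binomial_eq_0)
qed

lemma pow_fact_exp: "(x::real) \<ge> 0 \<Longrightarrow> x ^ n / fact n \<le> exp x"
proof -
  assume x: "x \<ge> 0"
  have "x ^ n / fact n \<le> (\<Sum>j\<le>n. x ^ j / fact j)"
    by (rule member_le_sum[where f = "\<lambda>j. x ^ j / fact j"]) (use x in auto)
  also have "\<dots> \<le> exp x"
    using x summable_exp_generic[of x]
    by (auto simp: exp_def divide_inverse ac_simps intro!: sum_le_suminf)
  finally show ?thesis .
qed

lemma ln3_gt: "ln (3::real) > 21/20"
proof -
  have "1 + (-1/20) \<le> exp (-1/20::real)" by (rule exp_ge_add_one_self)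
  hence "exp (1/20::real) \<le> 20/19" by (simp add: exp_minus field_simps)
  hence a: "exp (1/20::real) \<le> 20/19" .
  have "exp (1::real) * exp (1/20) \<le> exp 1 * (20/19)" by (rule mult_left_mono) (use a in auto)
  also have "\<dots> < 272/100 * (20/19)" using e_less_272 by simp
  finally have "exp (1::real) * exp (1/20) < 272/100 * (20/19)" .
  hence "exp (21/20::real) < 3" by (simp add: exp_add[symmetric])
  thus ?thesis by (metis exp_less_cancel_iff exp_ln zero_less_numeral)
qed

lemma count_bound:
  fixes D t :: nat and q :: real
  assumes "q \<ge> 0" "real D * q \<le> 1/3" "t \<ge> 1"
  shows "real ((t * D) choose (t - 1)) * q ^ (t - 1) \<le> 3 * (exp 1 / 3) ^ t"
proof -
  have "real ((t * D) choose (t - 1)) * q ^ (t - 1) \<le> real (t * D) ^ (t - 1) / fact (t - 1) * q ^ (t - 1)"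
    using fact_binom[of "t * D" "t - 1"] assms(1) by (intro mult_right_mono) (auto simp: field_simps)
  also have "\<dots> = (real t * (real D * q)) ^ (t - 1) / fact (t - 1)"
    by (simp add: power_mult_distrib)
  also have "\<dots> \<le> (real t * (1/3)) ^ (t - 1) / fact (t - 1)"
    using assms by (intro divide_right_mono power_mono mult_left_mono) auto
  also have "\<dots> = real t ^ t / fact t * 3 * (1/3) ^ t"
  proof -
    obtain s where s: "t = Suc s" using assms(3) by (cases t) auto
    have f: "fact (Suc s) = real (Suc s) * fact s" by (simp add: fact_Suc)
    have p: "real (Suc s) ^ Suc s = real (Suc s) * real (Suc s) ^ s" by simp
    have "real (Suc s) ^ Suc s / fact (Suc s) = real (Suc s) ^ s / fact s"
      unfolding f p by (simp del: of_nat_Suc)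
    moreover have "(3::real) * (1/3) ^ Suc s = (1/3) ^ s" by simp
    ultimately show ?thesis unfolding s by (simp add: power_divide del: of_nat_Suc)
  qed
  also have "\<dots> \<le> exp (real t) * 3 * (1/3) ^ t"
    using pow_fact_exp[of "real t" t] by (intro mult_right_mono) auto
  also have "\<dots> = 3 * (exp 1 / 3) ^ t"
    by (simp add: exp_of_nat_mult[symmetric] power_mult_distrib field_simps) 
  finally show ?thesis .
qed



lemma is_codeD:
  assumes "is_code n E v t xs pr"
  shows "length xs = t" "distinct xs" "set xs \<subseteq> {..<n}" "\<forall>i\<in>{1..<t}. pr i < i"
  using assms unfolding is_code_def by blast+


lemma per_n_bound:
  fixes E :: "nat \<Rightarrow> nat \<Rightarrow> bool"
  assumes k: "k > 0" "k \<le> m" and mb: "real m \<ge> 3 * real k ^ 2 * real (max_degree n E)"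
      and t: "t = nat \<lfloor>20 * ln (real n)\<rfloor> + 1" and n1: "n \<ge> 1"
  shows "measure_pmf.prob (random_list_assignment k m n)
            {L. \<exists>v<n. real (card (component n E L v)) > 20 * ln (real n)} \<le> real n * (3 * (exp 1 / 3) ^ t)"
proof -
  let ?M = "random_list_assignment k m n"
  define q where "q = real k * real k / real m"
  have M: "?M = Pi_pmf {..<n} {} (\<lambda>_. pmf_of_set (Ks k m))"
    unfolding random_list_assignment_def Ks_def by simp
  define C where "C = (\<lambda>v. {(xs,pr). is_code n E v t xs pr})"
  define S where "S = Sigma {..<n} C"
  have fC: "\<And>v. finite (C v)" and cC: "\<And>v. card (C v) \<le> (t * DD n E) choose (t - 1)"
    unfolding C_def using code_count by blast+
  have fS: "finite S" unfolding S_def using fC by auto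
  have t1: "t \<ge> 1" using t by simp
  have sub: "{L. \<exists>v<n. real (card (component n E L v)) > 20 * ln (real n)}
        \<subseteq> (\<Union>p\<in>S. Ev (fst (snd p)) (snd (snd p)))"
  proof
    fix L assume "L \<in> {L. \<exists>v<n. real (card (component n E L v)) > 20 * ln (real n)}"
    then obtain v where v: "v < n" and cv: "real (card (component n E L v)) > 20 * ln (real n)" by auto
    have ln0: "ln (real n) \<ge> 0" using n1 by simp
    have "real (nat \<lfloor>20 * ln (real n)\<rfloor>) \<le> 20 * ln (real n)"
      using ln0 of_int_floor_le[of "20 * ln (real n)"] by simp
    hence "nat \<lfloor>20 * ln (real n)\<rfloor> < card (component n E L v)" using cv by linarith
    hence tc: "t \<le> card (component n E L v)" using t by simp
    obtain xs pr where c: "is_code n E v t xs pr" and dg: "\<forall>i\<in>{1..<t}. dangerous n E L (xs ! pr i) (xs ! i)"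
      using greedy[OF v t1 tc] by blast
    have lx: "length xs = t" using is_codeD(1)[OF c] .
    have "L \<in> Ev xs pr" unfolding Ev_def lx
    proof (intro CollectI ballI)
      fix i assume "i \<in> {1..<t}"
      hence "L (xs ! pr i) \<inter> L (xs ! i) \<noteq> {}" using dg unfolding dangerous_def by blast
      thus "L (xs ! i) \<inter> L (xs ! pr i) \<noteq> {}" by blast
    qed
    moreover have "(v, xs, pr) \<in> S" unfolding S_def C_def using v c by simp
    ultimately show "L \<in> (\<Union>p\<in>S. Ev (fst (snd p)) (snd (snd p)))"
      by (intro UN_I[of "(v, xs, pr)"]) simp_all
  qed
  have "measure_pmf.prob ?M {L. \<exists>v<n. real (card (component n E L v)) > 20 * ln (real n)}
      \<le> measure_pmf.prob ?M (\<Union>p\<in>S. Ev (fst (snd p)) (snd (snd p)))"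
    by (rule measure_pmf.finite_measure_mono[OF sub]) simp
  also have "\<dots> \<le> (\<Sum>p\<in>S. measure_pmf.prob ?M (Ev (fst (snd p)) (snd (snd p))))"
    by (rule measure_pmf.finite_measure_subadditive_finite[OF fS]) auto
  also have "\<dots> \<le> (\<Sum>p\<in>S. q ^ (t - 1))"
  proof (rule sum_mono)
    fix p assume "p \<in> S"
    then obtain v xs pr where p: "p = (v, xs, pr)" and c: "is_code n E v t xs pr"
      unfolding S_def C_def by auto
    have "measure_pmf.prob ?M (Ev xs pr) \<le> q ^ (length xs - 1)"
      unfolding M q_def using is_codeD[OF c] k by (intro tree_prob) simp_all
    thus "measure_pmf.prob ?M (Ev (fst (snd p)) (snd (snd p))) \<le> q ^ (t - 1)"
      using is_codeD(1)[OF c] p by simp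
  qed
  also have "\<dots> = real (card S) * q ^ (t - 1)" by simp
  also have "\<dots> \<le> real n * real ((t * DD n E) choose (t - 1)) * q ^ (t - 1)"
  proof (rule mult_right_mono)
    have "card S = (\<Sum>v<n. card (C v))" unfolding S_def using fC by (simp add: card_SigmaI)
    also have "\<dots> \<le> n * ((t * DD n E) choose (t - 1))" using cC sum_bounded_above[of "{..<n}" "\<lambda>v. card (C v)"] by auto
    finally show "real (card S) \<le> real n * real ((t * DD n E) choose (t - 1))"
      by (metis of_nat_le_iff of_nat_mult)
  qed (simp add: q_def)
  also have "\<dots> = real n * (real ((t * DD n E) choose (t - 1)) * q ^ (t - 1))" by simp
  also have "\<dots> \<le> real n * (3 * (exp 1 / 3) ^ t)"
  proof (rule mult_left_mono[OF count_bound])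
    have m0: "real m > 0" using k by simp
    have "real (DD n E) * q = real k ^ 2 * real (max_degree n E) / real m"
      unfolding q_def DD_def by (simp add: power2_eq_square)
    also have "\<dots> \<le> 1/3" using mb m0 by (simp add: field_simps)
    finally show "real (DD n E) * q \<le> 1/3" .
  qed (use t1 in \<open>auto simp: q_def\<close>)
  finally show ?thesis .
qed

lemma asym_bound:
  assumes "n \<ge> 1" "t = nat \<lfloor>20 * ln (real n)\<rfloor> + 1"
  shows "real n * (3 * (exp 1 / 3) ^ t) \<le> 3 * real n powr (21 - 20 * ln 3)"
proof -
  have n0: "real n > 0" using assms by simp
  have ln0: "ln (real n) \<ge> 0" using assms by simp
  have fl0: "\<lfloor>20 * ln (real n)\<rfloor> \<ge> 0" using ln0 by simp
  have rt: "real t = real_of_int \<lfloor>20 * ln (real n)\<rfloor> + 1" using assms(2) fl0 by simp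
  have tge: "real t \<ge> 20 * ln (real n)"
    using rt real_of_int_floor_add_one_ge[of "20 * ln (real n)"] by linarith
  have e3: "exp (1::real) / 3 = exp (1 - ln 3)" by (simp add: exp_diff)
  have "(exp 1 / 3) ^ t = exp (real t * (1 - ln 3))" unfolding e3 by (simp add: exp_of_nat_mult)
  also have "\<dots> \<le> exp (20 * ln (real n) * (1 - ln 3))"
    using ln3_gt tge by (intro exp_mono mult_right_mono_neg) auto
  finally have a: "(exp 1 / 3) ^ t \<le> exp (20 * ln (real n) * (1 - ln 3))" .
  have "real n * (3 * (exp 1 / 3) ^ t) \<le> real n * (3 * exp (20 * ln (real n) * (1 - ln 3)))"
    using a n0 by simp
  also have "\<dots> = 3 * (exp (ln (real n)) * exp (20 * ln (real n) * (1 - ln 3)))" using n0 by simp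
  also have "\<dots> = 3 * exp ((21 - 20 * ln 3) * ln (real n))" by (simp add: exp_add[symmetric] algebra_simps)
  also have "\<dots> = 3 * real n powr (21 - 20 * ln 3)" using n0 by (simp add: powr_def)
  finally show ?thesis .
qed


theorem mainTheorem4:
  fixes k :: nat and E :: "nat \<Rightarrow> nat \<Rightarrow> nat \<Rightarrow> bool" and m :: "nat \<Rightarrow> nat"
  assumes "k > 0"
    and sym: "\<And>n u v. E n u v \<Longrightarrow> E n v u"
    and irrefl: "\<And>n v. \<not> E n v v"
    and m_bound: "\<And>n. real (m n) \<ge> 3 * real k ^ 2 * real (max_degree n (E n))"
    and m_ge_k: "\<And>n. k \<le> m n"
  shows "(\<lambda>n. measure_pmf.prob (random_list_assignment k (m n) n)
            {L. \<forall>v<n. real (card (component n (E n) L v)) \<le> 20 * ln (real n)})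
         \<longlonglongrightarrow> 1"
proof -
  define a where "a = 21 - 20 * ln (3::real)"
  have a: "a < 0" using ln3_gt by (simp add: a_def)
  define bad where "bad = (\<lambda>n. {L. \<exists>v<n. real (card (component n (E n) L v)) > 20 * ln (real n)})"
  have good: "\<And>n. {L. \<forall>v<n. real (card (component n (E n) L v)) \<le> 20 * ln (real n)} = UNIV - bad n"
    unfolding bad_def by (auto simp: not_le)
  have lower: "\<And>n. n \<ge> 1 \<Longrightarrow> 1 - 3 * real n powr a \<le> measure_pmf.prob (random_list_assignment k (m n) n)
            {L. \<forall>v<n. real (card (component n (E n) L v)) \<le> 20 * ln (real n)}"
  proof -
    fix n :: nat assume n1: "n \<ge> 1"
    define t where "t = nat \<lfloor>20 * ln (real n)\<rfloor> + 1"
    have "measure_pmf.prob (random_list_assignment k (m n) n) (bad n) \<le> real n * (3 * (exp 1 / 3) ^ t)"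
      unfolding bad_def by (rule per_n_bound[OF assms(1) m_ge_k m_bound t_def n1])
    also have "\<dots> \<le> 3 * real n powr a" unfolding a_def by (rule asym_bound[OF n1 t_def])
    finally have b: "measure_pmf.prob (random_list_assignment k (m n) n) (bad n) \<le> 3 * real n powr a" .
    have "measure_pmf.prob (random_list_assignment k (m n) n) (UNIV - bad n)
        = 1 - measure_pmf.prob (random_list_assignment k (m n) n) (bad n)"
      using measure_pmf.prob_compl[of "bad n" "random_list_assignment k (m n) n"] by simp
    thus "1 - 3 * real n powr a \<le> measure_pmf.prob (random_list_assignment k (m n) n)
            {L. \<forall>v<n. real (card (component n (E n) L v)) \<le> 20 * ln (real n)}"
      using b good[of n] by simp
  qed
  have lim0: "(\<lambda>n. real n powr a) \<longlonglongrightarrow> 0"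
    by (rule tendsto_neg_powr[OF a filterlim_real_sequentially])
  have lim1: "(\<lambda>n. 1 - 3 * real n powr a) \<longlonglongrightarrow> 1"
    using tendsto_diff[OF tendsto_const tendsto_mult[OF tendsto_const lim0], of 1 3] by simp
  show ?thesis
  proof (rule tendsto_sandwich[OF _ _ lim1 tendsto_const])
    show "\<forall>\<^sub>F n in sequentially. 1 - 3 * real n powr a \<le> measure_pmf.prob (random_list_assignment k (m n) n)
            {L. \<forall>v<n. real (card (component n (E n) L v)) \<le> 20 * ln (real n)}"
      using lower by (intro eventually_sequentiallyI[of 1]) auto
    show "\<forall>\<^sub>F n in sequentially. measure_pmf.prob (random_list_assignment k (m n) n)
            {L. \<forall>v<n. real (card (component n (E n) L v)) \<le> 20 * ln (real n)} \<le> 1"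
      by simp
  qed
qed

end
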